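(* Let $p\in[1,\infty]$ and for $\lambda\in\mathbb{R}$ let $S_\lambda$ be the operator on $L^p(0,1)$ given by $(S_\lambda f)(t)=\int_0^1 e^{\lambda(t-s)}f(s)\,ds$. Then $\|S_\lambda\|_p\sim C_p\,e^\lambda/\lambda$ as $\lambda\to\infty$ through $\mathbb{R}^+$. Moreover, define $f_\lambda(t)=e^{-g(\lambda)\lambda t}$ if $p=1$, $f_\lambda(t)=e^{-\lambda t/(p-1)}$ if $1<p<\infty$, and $f_\lambda(t)=1$ if $p=\infty$, where $g$ is any function with $g(\lambda)\to\infty$ as $\lambda\to\infty$. Then $(f_\lambda)$ is asymptotically extremal for $(S_\lambda)$, i.e. $\|S_\lambda f_\lambda\|_p\sim\|S_\lambda\|_p\|f_\lambda\|_p$ as $\lambda\to\infty$.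
   Context: $C_p=1/(p^{1/p}q^{1/q})$ if $1<p<\infty$ where $1/p+1/q=1$, and $C_p=1$ if $p=1$ or $p=\infty$. $\|\cdot\|_p$ denotes both the $L^p(0,1)$ norm and the corresponding operator norm. $a_\lambda\sim b_\lambda$ means $a_\lambda/b_\lambda\to1$. *)

theory Defs
  imports "HOL-Analysis.Analysis" "HOL-Probability.Essential_Supremum" "HOL-Library.Landau_Symbols"
begin

definition M01 :: "real measure" where
  "M01 = restrict_space lborel {0<..<1}"

definition Lp_norm :: "ereal \<Rightarrow> (real \<Rightarrow> real) \<Rightarrow> ereal" where
  "Lp_norm p f =
     (if p = \<infinity> then esssup M01 (\<lambda>x. ereal \<bar>f x\<bar>)
      else (let I = (\<integral>\<^sup>+ x. ennreal (\<bar>f x\<bar> powr real_of_ereal p) \<partial>M01)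
            in if I = \<infinity> then \<infinity> else ereal (enn2real I powr (1 / real_of_ereal p))))"

definition S_op :: "real \<Rightarrow> (real \<Rightarrow> real) \<Rightarrow> real \<Rightarrow> real" where
  "S_op l f t = (\<integral>s. exp (l * (t - s)) * f s \<partial>M01)"

definition S_opnorm :: "ereal \<Rightarrow> real \<Rightarrow> ereal" where
  "S_opnorm p l = Sup {Lp_norm p (S_op l f) | f. f \<in> borel_measurable M01 \<and> Lp_norm p f \<le> 1}"

definition C_const :: "ereal \<Rightarrow> real" where
  "C_const p = (if p = 1 \<or> p = \<infinity> then 1
     else (let r = real_of_ereal p; q = r / (r - 1) in 1 / (r powr (1 / r) * q powr (1 / q))))"

definition f_ext :: "ereal \<Rightarrow> (real \<Rightarrow> real) \<Rightarrow> real \<Rightarrow> real \<Rightarrow> real" where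
  "f_ext p g l t = (if p = 1 then exp (- g l * l * t)
     else if p = \<infinity> then 1
     else exp (- l * t / (real_of_ereal p - 1)))"

end

theory Submission
  imports Defs "HOL-Real_Asymp.Real_Asymp"
begin


lemma space_M01: "space M01 = {0<..<1}"
  by (simp add: M01_def)

lemma emeasure_M01_space: "emeasure M01 (space M01) = 1"
  by (simp add: M01_def emeasure_restrict_space)

lemma exp_has_integral01:
  fixes b :: real assumes "b \<noteq> 0"
  shows "((\<lambda>t. exp (b*t)) has_integral ((exp b - 1)/b)) {0<..<1}"
proof -
  have "((\<lambda>t. exp (b*t)) has_integral ((\<lambda>t. exp (b*t)/b) 1 - (\<lambda>t. exp (b*t)/b) 0)) {0..1}"
    apply (rule fundamental_theorem_of_calculus)
     apply simp
    unfolding has_real_derivative_iff_has_vector_derivative[symmetric]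
    using assms by (auto intro!: derivative_eq_intros)
  then show ?thesis by (simp add: diff_divide_distrib has_integral_Icc_iff_Ioo)
qed

lemma meas_M01: "f \<in> borel_measurable borel \<Longrightarrow> f \<in> borel_measurable M01"
  unfolding M01_def by (rule measurable_restrict_space1) simp

lemma nn_exp_M01:
  fixes b :: real assumes "b \<noteq> 0"
  shows "(\<integral>\<^sup>+t. ennreal (exp (b*t)) \<partial>M01) = ennreal ((exp b - 1)/b)"
  unfolding M01_def
  by (subst nn_integral_restrict_space) (auto intro!: nn_integral_has_integral_lebesgue' exp_has_integral01 assms)

lemma exp_quot_nonneg: "(b::real) \<noteq> 0 \<Longrightarrow> 0 < (exp b - 1)/b"
  by (cases "b > 0") (auto simp: divide_pos_pos divide_neg_neg)

lemma int_exp_M01: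
  fixes b :: real assumes "b \<noteq> 0"
  shows "(\<integral>t. exp (b*t) \<partial>M01) = (exp b - 1)/b"
  apply (subst integral_eq_nn_integral)
  using nn_exp_M01[OF assms] exp_quot_nonneg[OF assms] by (auto intro!: meas_M01)

lemma exp_powr': "exp (a::real) powr P = exp (P * a)"
  by (simp add: powr_def)




lemma Lp_exp_finite:
  fixes a x :: real
  assumes p1: "1 \<le> p" and pinf: "p \<noteq> \<infinity>" and a: "a \<noteq> 0"
  shows "Lp_norm p (\<lambda>t. exp (a*t) * x) =
    ereal (\<bar>x\<bar> * ((exp (real_of_ereal p * a) - 1) / (real_of_ereal p * a)) powr (1 / real_of_ereal p))"
proof -
  define P where "P = real_of_ereal p"
  have P1: "1 \<le> P" using p1 pinf unfolding P_def
    by (cases p) auto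
  define E where "E = (exp (P * a) - 1) / (P * a)"
  have Pa: "P * a \<noteq> 0" using P1 a by auto
  have E0: "0 < E" unfolding E_def by (rule exp_quot_nonneg[OF Pa])
  have pt: "ennreal (\<bar>exp (a*t) * x\<bar> powr P) = ennreal (\<bar>x\<bar> powr P) * ennreal (exp ((P*a)*t))" for t
  proof -
    have "\<bar>exp (a*t) * x\<bar> powr P = exp (a*t) powr P * \<bar>x\<bar> powr P"
      by (simp add: abs_mult powr_mult)
    also have "\<dots> = \<bar>x\<bar> powr P * exp ((P*a)*t)"
      by (simp add: exp_powr' mult.commute mult.left_commute)
    finally show ?thesis by (simp add: ennreal_mult)
  qed
  have I: "(\<integral>\<^sup>+ t. ennreal (\<bar>exp (a*t) * x\<bar> powr P) \<partial>M01) = ennreal (\<bar>x\<bar> powr P * E)"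
    unfolding pt
    by (subst nn_integral_cmult) (auto intro!: meas_M01 simp: nn_exp_M01[OF Pa] E_def[symmetric] ennreal_mult[symmetric] less_imp_le[OF E0])
  have "(\<bar>x\<bar> powr P * E) powr (1 / P) = \<bar>x\<bar> * E powr (1/P)"
    using P1 E0 by (simp add: powr_mult powr_powr)
  then show ?thesis
    unfolding Lp_norm_def using pinf I E0 by (simp add: P_def[symmetric] E_def[symmetric] Let_def)
qed



lemma AE_M01_interval:
  assumes ae: "AE t in M01. P t" and ab: "0 \<le> a" "a < b" "b \<le> 1"
  shows "\<exists>t\<in>{a<..<b}. P t"
proof (rule ccontr)
  assume nt: "\<not> (\<exists>t\<in>{a<..<b}. P t)"
  have "AE t in lborel. t \<in> {0<..<1} \<longrightarrow> P t"
    using ae unfolding M01_def by (subst (asm) AE_restrict_space_iff) auto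
  then obtain N where N: "{t \<in> space lborel. \<not> (t \<in> {0<..<1} \<longrightarrow> P t)} \<subseteq> N"
    "emeasure lborel N = 0" "N \<in> sets lborel"
    by (elim AE_E) blast
  have "{a<..<b} \<subseteq> N" using N(1) nt ab by force
  then have "emeasure lborel {a<..<b} \<le> emeasure lborel N" using N(3) by (rule emeasure_mono)
  then show False using N(2) ab by simp
qed

lemma meas_test: "(\<lambda>t. ereal \<bar>exp (l*t) * x\<bar>) \<in> borel_measurable M01"
  by (intro meas_M01) measurable

lemma esssup_exp:
  fixes l x :: real assumes l: "0 < l"
  shows "esssup M01 (\<lambda>t. ereal \<bar>exp (l*t) * x\<bar>) = ereal (\<bar>x\<bar> * exp l)"
proof (cases "x = 0")
  case True
  then show ?thesis using emeasure_M01_space by (simp add: esssup_const)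
next
  case x0: False
  have meas: "(\<lambda>t. ereal \<bar>exp (l*t) * x\<bar>) \<in> borel_measurable M01"
    by (intro meas_M01) measurable
  show ?thesis
  proof (rule antisym)
    show "esssup M01 (\<lambda>t. ereal \<bar>exp (l*t) * x\<bar>) \<le> ereal (\<bar>x\<bar> * exp l)"
    proof (rule esssup_I[OF meas], rule AE_I2)
      fix t assume "t \<in> space M01"
      then have "t < 1" by (simp add: space_M01)
      then have "exp (l*t) \<le> exp l" using l by simp
      then show "ereal \<bar>exp (l*t) * x\<bar> \<le> ereal (\<bar>x\<bar> * exp l)"
        by (simp add: abs_mult mult.commute mult_left_mono)
    qed
  next
    show "ereal (\<bar>x\<bar> * exp l) \<le> esssup M01 (\<lambda>t. ereal \<bar>exp (l*t) * x\<bar>)"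
    proof (rule ccontr)
      define z where "z = esssup M01 (\<lambda>t. ereal \<bar>exp (l*t) * x\<bar>)"
      assume "\<not> ereal (\<bar>x\<bar> * exp l) \<le> esssup M01 (\<lambda>t. ereal \<bar>exp (l*t) * x\<bar>)"
      then have zc: "z < ereal (\<bar>x\<bar> * exp l)" unfolding z_def by simp
      obtain w where w: "z < w" "w < ereal (\<bar>x\<bar> * exp l)" using dense[OF zc] by blast
      then obtain w' where w': "w = ereal w'" by (cases w) auto
      have ae: "AE t in M01. \<bar>exp (l*t) * x\<bar> \<le> w'"
        using esssup_AE[where M=M01 and f="\<lambda>t. ereal \<bar>exp (l*t) * x\<bar>"] w w'
        unfolding z_def[symmetric] by (elim eventually_mono) (metis ereal_less_eq(3) less_imp_le order.trans)
      have wl: "w' < \<bar>x\<bar> * exp l" using w w' by simp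
      define t0 where "t0 = (if w' \<le> 0 then 0 else max 0 (ln (w' / \<bar>x\<bar>) / l))"
      have t0: "0 \<le> t0" "t0 < 1"
      proof -
        show "0 \<le> t0" unfolding t0_def by auto
        have "ln (w' / \<bar>x\<bar>) < l" if "w' > 0"
        proof -
          have "w' / \<bar>x\<bar> < exp l" using wl x0 by (simp add: field_simps)
          then have "ln (w' / \<bar>x\<bar>) < ln (exp l)" using that x0 by (subst ln_less_cancel_iff) auto
          then show ?thesis by simp
        qed
        then show "t0 < 1" unfolding t0_def using l by (auto simp: field_simps)
      qed
      have "\<bar>exp (l*t) * x\<bar> > w'" if "t \<in> {t0<..<1}" for t
      proof (cases "w' \<le> 0")
        case True
        have "0 < exp (l*t) * \<bar>x\<bar>" using x0 by simp
        then show ?thesis using True by (simp add: abs_mult)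
      next
        case False
        then have "ln (w' / \<bar>x\<bar>) / l < t" using that unfolding t0_def by auto
        then have "ln (w' / \<bar>x\<bar>) < l * t" using l by (simp add: field_simps)
        then have "w' / \<bar>x\<bar> < exp (l*t)" using False x0
        proof -
          have "0 < w' / \<bar>x\<bar>" using False x0 by simp
          have "exp (ln (w' / \<bar>x\<bar>)) < exp (l*t)" using \<open>ln (w' / \<bar>x\<bar>) < l * t\<close> by (rule exp_less_mono)
          then show ?thesis by (simp only: exp_ln[OF \<open>0 < w' / \<bar>x\<bar>\<close>])
        qed
        then show ?thesis using x0 by (simp add: abs_mult field_simps)
      qed
      then show False using AE_M01_interval[OF ae t0(1) t0(2) order_refl] by force
    qed
  qed
qed



definition cf :: "real \<Rightarrow> (real \<Rightarrow> real) \<Rightarrow> real" where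
  "cf l f = (\<integral>s. exp (- (l * s)) * f s \<partial>M01)"

definition PP :: "ereal \<Rightarrow> real" where "PP p = real_of_ereal p"
definition QQ :: "ereal \<Rightarrow> real" where "QQ p = PP p / (PP p - 1)"

definition Afun :: "ereal \<Rightarrow> real \<Rightarrow> real" where
  "Afun p l = (if p = \<infinity> then exp l else ((exp (PP p * l) - 1) / (PP p * l)) powr (1 / PP p))"

definition Bq :: "ereal \<Rightarrow> real \<Rightarrow> real" where
  "Bq p l = (if p = 1 then 1 else if p = \<infinity> then (exp (-l) - 1) / (-l)
     else ((exp (-(QQ p * l)) - 1) / (-(QQ p * l))) powr (1 / QQ p))"

lemma S_op_eq: "S_op l f = (\<lambda>t. exp (l*t) * cf l f)"
proof
  fix t
  have "exp (l*(t-s)) * f s = exp (l*t) * (exp (- (l * s)) * f s)" for s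
    by (simp add: right_diff_distrib exp_diff exp_minus field_simps)
  then show "S_op l f t = exp (l*t) * cf l f"
    unfolding S_op_def cf_def by (simp only: integral_mult_right_zero)
qed

lemma abs_int_le_nn:
  fixes F :: "real \<Rightarrow> real"
  shows "ennreal \<bar>integral\<^sup>L M F\<bar> \<le> (\<integral>\<^sup>+ s. ennreal \<bar>F s\<bar> \<partial>M)"
proof (cases "integrable M F")
  case True
  then show ?thesis using integral_norm_bound_ennreal[OF True] by simp
next
  case False
  then show ?thesis by (simp add: not_integrable_integral_eq)
qed

lemma PP_ge1: "1 \<le> p \<Longrightarrow> p \<noteq> \<infinity> \<Longrightarrow> 1 \<le> PP p"
  unfolding PP_def by (cases p) auto

lemma Lp_le1:
  assumes p1: "1 \<le> p" and pinf: "p \<noteq> \<infinity>" and le: "Lp_norm p f \<le> 1"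
  shows "(\<integral>\<^sup>+ x. ennreal (\<bar>f x\<bar> powr PP p) \<partial>M01) \<le> 1"
proof -
  define I where "I = (\<integral>\<^sup>+ x. ennreal (\<bar>f x\<bar> powr PP p) \<partial>M01)"
  have P1: "1 \<le> PP p" using PP_ge1[OF p1 pinf] .
  have Ifin: "I \<noteq> \<infinity>" and r: "enn2real I powr (1 / PP p) \<le> 1"
    using le pinf unfolding Lp_norm_def I_def[symmetric] PP_def[symmetric] Let_def
    by (auto split: if_splits)
  define r where "r = enn2real I"
  have r0: "0 \<le> r" unfolding r_def by simp
  have "r = (r powr (1 / PP p)) powr PP p" using P1 r0 by (simp add: powr_powr)
  also have "\<dots> \<le> 1 powr PP p"
    by (rule powr_mono2) (use P1 r r_def in auto)
  finally have "r \<le> 1" by simp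
  moreover have "I = ennreal r" using Ifin unfolding r_def by (simp add: ennreal_enn2real_if less_top)
  ultimately show ?thesis unfolding I_def[symmetric] by simp
qed



lemma cf_bound_nn: "ennreal \<bar>cf l f\<bar> \<le> (\<integral>\<^sup>+ s. ennreal (exp (- (l * s)) * \<bar>f s\<bar>) \<partial>M01)"
  unfolding cf_def using abs_int_le_nn[of M01 "\<lambda>s. exp (- (l * s)) * f s"]
  by (simp add: abs_mult)

lemma K1_one:
  assumes l: "0 < l" and le: "Lp_norm 1 f \<le> 1"
  shows "\<bar>cf l f\<bar> \<le> 1"
proof -
  have "(\<integral>\<^sup>+ x. ennreal (\<bar>f x\<bar> powr PP 1) \<partial>M01) \<le> 1"
    by (rule Lp_le1[OF _ _ le]) auto
  then have I: "(\<integral>\<^sup>+ x. ennreal \<bar>f x\<bar> \<partial>M01) \<le> 1" by (simp add: PP_def)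
  have "(\<integral>\<^sup>+ s. ennreal (exp (- (l * s)) * \<bar>f s\<bar>) \<partial>M01) \<le> (\<integral>\<^sup>+ x. ennreal \<bar>f x\<bar> \<partial>M01)"
  proof (rule nn_integral_mono_AE, rule AE_I2)
    fix s assume "s \<in> space M01"
    then have "0 < s" by (simp add: space_M01)
    then have "exp (- (l * s)) \<le> 1" using l by simp
    then show "ennreal (exp (- (l * s)) * \<bar>f s\<bar>) \<le> ennreal \<bar>f s\<bar>"
      by (intro ennreal_leI) (simp add: mult_left_le_one_le)
  qed
  then have "ennreal \<bar>cf l f\<bar> \<le> 1" using cf_bound_nn[of l f] I by (meson order.trans)
  then show ?thesis by simp
qed

lemma K1_inf:
  assumes l: "0 < l" and le: "Lp_norm \<infinity> f \<le> 1"
  shows "\<bar>cf l f\<bar> \<le> (exp (-l) - 1) / (-l)"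
proof -
  have ae: "AE x in M01. \<bar>f x\<bar> \<le> 1"
  proof -
    have e: "esssup M01 (\<lambda>x. ereal \<bar>f x\<bar>) \<le> 1" using le unfolding Lp_norm_def by simp
    show ?thesis
      using esssup_AE[where M=M01 and f="\<lambda>x. ereal \<bar>f x\<bar>"]
    proof (rule eventually_mono)
      fix x assume "ereal \<bar>f x\<bar> \<le> esssup M01 (\<lambda>x. ereal \<bar>f x\<bar>)"
      then have "ereal \<bar>f x\<bar> \<le> ereal 1" using e unfolding one_ereal_def by (rule order.trans)
      then show "\<bar>f x\<bar> \<le> 1" by (simp only: ereal_less_eq)
    qed
  qed
  have "(\<integral>\<^sup>+ s. ennreal (exp (- (l * s)) * \<bar>f s\<bar>) \<partial>M01) \<le> (\<integral>\<^sup>+ s. ennreal (exp ((-l) * s)) \<partial>M01)"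
  proof (rule nn_integral_mono_AE)
    show "AE s in M01. ennreal (exp (- (l * s)) * \<bar>f s\<bar>) \<le> ennreal (exp ((-l) * s))"
      using ae
    proof (rule eventually_mono)
      fix s assume "\<bar>f s\<bar> \<le> 1"
      then have "exp (- (l * s)) * \<bar>f s\<bar> \<le> exp (- (l * s)) * 1"
        by (intro mult_left_mono) auto
      then show "ennreal (exp (- (l * s)) * \<bar>f s\<bar>) \<le> ennreal (exp ((-l) * s))"
        by (intro ennreal_leI) simp
    qed
  qed
  also have "\<dots> = ennreal ((exp (-l) - 1) / (-l))" using nn_exp_M01[of "-l"] l by simp
  finally have "ennreal \<bar>cf l f\<bar> \<le> ennreal ((exp (-l) - 1) / (-l))" using cf_bound_nn[of l f] by (meson order.trans)
  then show ?thesis using exp_quot_nonneg[of "-l"] l by (simp add: ennreal_le_iff)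
qed



lemma QQ_facts:
  assumes "1 < PP p"
  shows "1 < QQ p" "1 / PP p + 1 / QQ p = 1"
  using assms unfolding QQ_def by (auto simp: field_simps)

lemma K1_mid:
  assumes l: "0 < l" and P1: "1 < PP p" and pinf: "p \<noteq> \<infinity>" and le: "Lp_norm p f \<le> 1"
    and fm: "f \<in> borel_measurable M01"
  shows "\<bar>cf l f\<bar> \<le> ((exp (-(QQ p * l)) - 1) / (-(QQ p * l))) powr (1 / QQ p)"
proof -
  define P where "P = PP p"
  define Q where "Q = QQ p"
  have P1': "1 < P" and Q1: "1 < Q" and PQ: "1/P + 1/Q = 1"
    using QQ_facts[OF P1] P1 unfolding P_def Q_def by auto
  have p1: "1 \<le> p"
  proof (rule ccontr)
    assume "\<not> 1 \<le> p" then have "p < 1" by simp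
    then have "PP p \<le> 1" unfolding PP_def by (cases p) auto
    then show False using P1 by simp
  qed
  define J where "J = (exp (-(Q * l)) - 1) / (-(Q * l))"
  have Ql: "-(Q*l) \<noteq> 0" using Q1 l by simp
  have J0: "0 < J" unfolding J_def by (rule exp_quot_nonneg[OF Ql])
  define B where "B = J powr (1/Q)"
  have B0: "0 < B" unfolding B_def using J0 by simp
  have BQ: "B powr Q = J" unfolding B_def using J0 Q1 by (simp add: powr_powr)
  have I: "(\<integral>\<^sup>+ x. ennreal (\<bar>f x\<bar> powr P) \<partial>M01) \<le> 1"
    unfolding P_def by (rule Lp_le1[OF p1 pinf le])
  have pw: "exp (- (l * s)) * \<bar>f s\<bar> \<le> B / P * \<bar>f s\<bar> powr P + B / (Q * J) * exp ((-(Q*l)) * s)" for s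
  proof -
    have y: "\<bar>f s\<bar> * (exp (- (l * s)) / B) \<le> \<bar>f s\<bar> powr P / P + (exp (- (l * s)) / B) powr Q / Q"
      by (rule Youngs_inequality) (use P1' Q1 PQ B0 in auto)
    have "(exp (- (l * s)) / B) powr Q = exp ((-(Q*l)) * s) / J"
      using B0 by (simp add: powr_divide BQ exp_powr' mult.commute mult.left_commute)
    then have y2: "\<bar>f s\<bar> * (exp (- (l * s)) / B) \<le> \<bar>f s\<bar> powr P / P + exp ((-(Q*l)) * s) / (Q * J)"
      using y by (simp add: mult.commute)
    have "exp (- (l * s)) * \<bar>f s\<bar> = B * (\<bar>f s\<bar> * (exp (- (l * s)) / B))" using B0 by simp
    also have "\<dots> \<le> B * (\<bar>f s\<bar> powr P / P + exp ((-(Q*l)) * s) / (Q * J))"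
      using y2 B0 by (intro mult_left_mono) auto
    also have "\<dots> = B / P * \<bar>f s\<bar> powr P + B / (Q * J) * exp ((-(Q*l)) * s)"
      by (simp add: field_simps)
    finally show ?thesis .
  qed
  have "(\<integral>\<^sup>+ s. ennreal (exp (- (l * s)) * \<bar>f s\<bar>) \<partial>M01)
      \<le> (\<integral>\<^sup>+ s. ennreal (B / P) * ennreal (\<bar>f s\<bar> powr P) + ennreal (B / (Q * J)) * ennreal (exp ((-(Q*l)) * s)) \<partial>M01)"
  proof (rule nn_integral_mono)
    fix s
    show "ennreal (exp (- (l * s)) * \<bar>f s\<bar>) \<le> ennreal (B / P) * ennreal (\<bar>f s\<bar> powr P) + ennreal (B / (Q * J)) * ennreal (exp ((-(Q*l)) * s))"
      using pw[of s] B0 P1' Q1 J0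
      by (simp add: ennreal_mult[symmetric] ennreal_plus[symmetric] del: ennreal_plus ennreal_le_iff) (intro ennreal_leI, simp)
  qed
  also have "\<dots> = ennreal (B / P) * (\<integral>\<^sup>+ x. ennreal (\<bar>f x\<bar> powr P) \<partial>M01)
       + ennreal (B / (Q * J)) * (\<integral>\<^sup>+ s. ennreal (exp ((-(Q*l)) * s)) \<partial>M01)"
  proof -
    have m1: "(\<lambda>s. ennreal (exp ((-(Q*l)) * s))) \<in> borel_measurable M01" by (intro meas_M01) measurable
    have m2: "(\<lambda>s. ennreal (\<bar>f s\<bar> powr P)) \<in> borel_measurable M01" using fm by measurable
    show ?thesis
      apply (subst nn_integral_add)
        apply (use m1 m2 in measurable)
      apply (subst nn_integral_cmult[OF m1])
      apply (subst nn_integral_cmult[OF m2])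
      apply (rule refl)
      done
  qed
  also have "\<dots> \<le> ennreal (B / P) * 1 + ennreal (B / (Q * J)) * ennreal J"
    using I nn_exp_M01[OF Ql] unfolding J_def[symmetric]
    by (intro add_mono mult_left_mono) auto
  also have "\<dots> = ennreal B"
  proof -
    have "B / (Q * J) * J = B / Q" using J0 by simp
    moreover have "B / P + B / Q = B" using PQ by (metis mult.right_neutral times_divide_eq_right distrib_left)
    ultimately show ?thesis using B0 J0 P1' Q1
      by (simp add: ennreal_mult[symmetric] ennreal_plus[symmetric] del: ennreal_plus)
  qed
  finally have "ennreal \<bar>cf l f\<bar> \<le> ennreal B" using cf_bound_nn[of l f] by (meson order.trans)
  then show ?thesis using B0 unfolding B_def J_def Q_def by (simp add: ennreal_le_iff)
qed



lemma p_cases: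
  assumes "1 \<le> (p::ereal)"
  obtains "p = 1" | "p = \<infinity>" | "p \<noteq> 1" "p \<noteq> \<infinity>" "1 < PP p"
proof -
  consider "p = 1" | "p = \<infinity>" | "p \<noteq> 1" "p \<noteq> \<infinity>" by blast
  then show ?thesis
  proof cases
    case 3
    then have "1 < PP p" using assms unfolding PP_def by (cases p) auto
    then show ?thesis using 3 that by blast
  qed (use that in auto)
qed

lemma K1:
  assumes l: "0 < l" and p1: "1 \<le> p" and fm: "f \<in> borel_measurable M01" and le: "Lp_norm p f \<le> 1"
  shows "\<bar>cf l f\<bar> \<le> Bq p l"
  using p1
proof (cases rule: p_cases)
  case 1 then show ?thesis using K1_one[OF l] le by (simp add: Bq_def)
next
  case 2 then show ?thesis using K1_inf[OF l] le by (simp add: Bq_def)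
next
  case 3 then show ?thesis using K1_mid[OF l 3(3) 3(2) le fm] by (simp add: Bq_def)
qed

lemma Afun_pos: "0 < l \<Longrightarrow> 1 \<le> p \<Longrightarrow> 0 < Afun p l"
  unfolding Afun_def using exp_quot_nonneg[of "PP p * l"] PP_ge1[of p]
  by (auto simp: PP_def)

lemma Bq_pos: "0 < l \<Longrightarrow> 1 \<le> p \<Longrightarrow> 0 < Bq p l"
proof -
  assume l: "0 < l" and p: "1 \<le> p"
  show ?thesis using p
  proof (cases rule: p_cases)
    case 3
    then have "1 < QQ p" using QQ_facts by auto
    then show ?thesis unfolding Bq_def using 3 exp_quot_nonneg[of "-(QQ p * l)"] l by auto
  qed (use l exp_quot_nonneg[of "-l"] in \<open>auto simp: Bq_def\<close>)
qed

lemma K2: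
  assumes l: "0 < l" and p1: "1 \<le> p"
  shows "Lp_norm p (\<lambda>t. exp (l*t) * x) = ereal (\<bar>x\<bar> * Afun p l)"
proof (cases "p = \<infinity>")
  case True
  then show ?thesis using esssup_exp[OF l, of x] by (simp add: Lp_norm_def Afun_def)
next
  case False
  then show ?thesis using Lp_exp_finite[OF p1 False, of l x] l by (simp add: Afun_def PP_def)
qed

lemma Lp_Sop:
  assumes l: "0 < l" and p1: "1 \<le> p"
  shows "Lp_norm p (S_op l f) = ereal (\<bar>cf l f\<bar> * Afun p l)"
  unfolding S_op_eq K2[OF l p1] by (simp add: mult.commute)

lemma opnorm_upper:
  assumes l: "0 < l" and p1: "1 \<le> p"
  shows "S_opnorm p l \<le> ereal (Afun p l * Bq p l)"
  unfolding S_opnorm_def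
proof (rule Sup_least, clarify)
  fix f assume fm: "f \<in> borel_measurable M01" and le: "Lp_norm p f \<le> 1"
  have "\<bar>cf l f\<bar> * Afun p l \<le> Bq p l * Afun p l"
    using K1[OF l p1 fm le] Afun_pos[OF l p1] by (intro mult_right_mono) auto
  then show "Lp_norm p (S_op l f) \<le> ereal (Afun p l * Bq p l)"
    unfolding Lp_Sop[OF l p1] by (simp add: mult.commute)
qed

lemma opnorm_lower:
  assumes l: "0 < l" and p1: "1 \<le> p" and fm: "f \<in> borel_measurable M01" and le: "Lp_norm p f \<le> 1"
  shows "ereal (\<bar>cf l f\<bar> * Afun p l) \<le> S_opnorm p l"
  unfolding S_opnorm_def Lp_Sop[OF l p1, symmetric]
  by (rule Sup_upper) (use fm le in blast)



lemma squeeze: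
  fixes A B N c Op K :: "real \<Rightarrow> real"
  assumes ev: "eventually (\<lambda>l. 0 < A l \<and> 0 < B l \<and> 0 < N l \<and> 0 < c l \<and>
       A l * c l / N l \<le> Op l \<and> Op l \<le> A l * B l) at_top"
    and R: "((\<lambda>l. c l / (B l * N l)) \<longlongrightarrow> 1) at_top"
    and K: "((\<lambda>l. A l * B l / K l) \<longlongrightarrow> 1) at_top"
  shows "((\<lambda>l. Op l / K l) \<longlongrightarrow> 1) at_top"
    "((\<lambda>l. c l * A l / (Op l * N l)) \<longlongrightarrow> 1) at_top"
proof -
  have s1: "((\<lambda>l. Op l / (A l * B l)) \<longlongrightarrow> 1) at_top"
  proof (rule tendsto_sandwich[OF _ _ R tendsto_const])
    show "eventually (\<lambda>l. c l / (B l * N l) \<le> Op l / (A l * B l)) at_top"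
      using ev by (elim eventually_mono) (auto simp: field_simps)
    show "eventually (\<lambda>l. Op l / (A l * B l) \<le> 1) at_top"
      using ev by (elim eventually_mono) (auto simp: field_simps)
  qed
  have "((\<lambda>l. Op l / (A l * B l) * (A l * B l / K l)) \<longlongrightarrow> 1 * 1) at_top"
    by (rule tendsto_mult[OF s1 K])
  moreover have "eventually (\<lambda>l. Op l / (A l * B l) * (A l * B l / K l) = Op l / K l) at_top"
    using ev by (elim eventually_mono) (auto simp: field_simps)
  ultimately show "((\<lambda>l. Op l / K l) \<longlongrightarrow> 1) at_top"
    by (simp only: mult_1) (rule Lim_transform_eventually)
  show "((\<lambda>l. c l * A l / (Op l * N l)) \<longlongrightarrow> 1) at_top"
  proof (rule tendsto_sandwich[OF _ _ R tendsto_const])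
    show "eventually (\<lambda>l. c l / (B l * N l) \<le> c l * A l / (Op l * N l)) at_top"
      using ev
    proof (rule eventually_mono, clarify)
      fix l assume h: "0 < A l" "0 < B l" "0 < N l" "0 < c l" "A l * c l / N l \<le> Op l" "Op l \<le> A l * B l"
      then have O0: "0 < Op l" by (smt (verit) divide_pos_pos mult_pos_pos)
      have "c l / (B l * N l) = c l * A l / ((A l * B l) * N l)" using h by (simp add: field_simps)
      also have "\<dots> \<le> c l * A l / (Op l * N l)"
        using h O0 by (intro divide_left_mono mult_right_mono) auto
      finally show "c l / (B l * N l) \<le> c l * A l / (Op l * N l)" .
    qed
    show "eventually (\<lambda>l. c l * A l / (Op l * N l) \<le> 1) at_top"
      using ev
    proof (rule eventually_mono, clarify)
      fix l assume h: "0 < A l" "0 < B l" "0 < N l" "0 < c l" "A l * c l / N l \<le> Op l" "Op l \<le> A l * B l"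
      then have O0: "0 < Op l" by (smt (verit) divide_pos_pos mult_pos_pos)
      have "c l * A l \<le> Op l * N l" using h by (simp add: field_simps)
      then show "c l * A l / (Op l * N l) \<le> 1" using O0 h by simp
    qed
  qed
qed

lemma bridge:
  fixes N c :: "real \<Rightarrow> real"
  assumes p1: "1 \<le> p"
    and ev: "eventually (\<lambda>l. 0 < l \<and> Lp_norm p (f_ext p g l) = ereal (N l) \<and> 0 < N l \<and> 0 < c l
        \<and> \<bar>cf l (f_ext p g l)\<bar> = c l
        \<and> (\<exists>h. h \<in> borel_measurable M01 \<and> Lp_norm p h \<le> 1 \<and> \<bar>cf l h\<bar> = c l / N l)) at_top"
    and R: "((\<lambda>l. c l / (Bq p l * N l)) \<longlongrightarrow> 1) at_top"
    and K: "((\<lambda>l. Afun p l * Bq p l / (C_const p * exp l / l)) \<longlongrightarrow> 1) at_top"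
  shows "((\<lambda>l. real_of_ereal (S_opnorm p l) / (C_const p * exp l / l)) \<longlongrightarrow> 1) at_top"
    "((\<lambda>l. real_of_ereal (Lp_norm p (S_op l (f_ext p g l))) /
         (real_of_ereal (S_opnorm p l) * real_of_ereal (Lp_norm p (f_ext p g l)))) \<longlongrightarrow> 1) at_top"
proof -
  define Op where "Op l = real_of_ereal (S_opnorm p l)" for l
  have ev2: "eventually (\<lambda>l. 0 < Afun p l \<and> 0 < Bq p l \<and> 0 < N l \<and> 0 < c l \<and>
       Afun p l * c l / N l \<le> Op l \<and> Op l \<le> Afun p l * Bq p l) at_top"
    using ev
  proof (rule eventually_mono, clarify)
    fix l h assume l: "0 < l" and N: "0 < N l" and c: "0 < c l" and hm: "h \<in> borel_measurable M01"
      and hle: "Lp_norm p h \<le> 1" and hc: "\<bar>cf l h\<bar> = c l / N l"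
    have A: "0 < Afun p l" and B: "0 < Bq p l" using Afun_pos[OF l p1] Bq_pos[OF l p1] by auto
    have lo: "ereal (c l / N l * Afun p l) \<le> S_opnorm p l"
      using opnorm_lower[OF l p1 hm hle] hc by simp
    have up: "S_opnorm p l \<le> ereal (Afun p l * Bq p l)" by (rule opnorm_upper[OF l p1])
    from lo up obtain r where r: "S_opnorm p l = ereal r"
      by (cases "S_opnorm p l") auto
    show "0 < Afun p l \<and> 0 < Bq p l \<and> 0 < N l \<and> 0 < c l \<and>
       Afun p l * c l / N l \<le> Op l \<and> Op l \<le> Afun p l * Bq p l"
      using A B N c lo up r unfolding Op_def by (simp add: mult.commute)
  qed
  note sq = squeeze[OF ev2 R K]
  show "((\<lambda>l. real_of_ereal (S_opnorm p l) / (C_const p * exp l / l)) \<longlongrightarrow> 1) at_top"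
    using sq(1) unfolding Op_def .
  have "eventually (\<lambda>l. c l * Afun p l / (Op l * N l) = real_of_ereal (Lp_norm p (S_op l (f_ext p g l))) /
         (real_of_ereal (S_opnorm p l) * real_of_ereal (Lp_norm p (f_ext p g l)))) at_top"
    using ev
  proof (rule eventually_mono, clarify)
    fix l assume l: "0 < l" and e: "Lp_norm p (f_ext p g l) = ereal (N l)" and cc: "\<bar>cf l (f_ext p g l)\<bar> = c l"
    show "c l * Afun p l / (Op l * N l) = real_of_ereal (Lp_norm p (S_op l (f_ext p g l))) /
         (real_of_ereal (S_opnorm p l) * real_of_ereal (Lp_norm p (f_ext p g l)))"
      unfolding Lp_Sop[OF l p1] e cc Op_def by simp
  qed
  then show "((\<lambda>l. real_of_ereal (Lp_norm p (S_op l (f_ext p g l))) /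
         (real_of_ereal (S_opnorm p l) * real_of_ereal (Lp_norm p (f_ext p g l)))) \<longlongrightarrow> 1) at_top"
    by (rule Lim_transform_eventually[OF sq(2)])
qed



lemma cf_exp:
  assumes "a \<noteq> l"
  shows "cf l (\<lambda>t. exp (a*t) * x) = x * ((exp (a-l) - 1) / (a-l))"
proof -
  have "(\<lambda>s. exp (- (l * s)) * (exp (a * s) * x)) = (\<lambda>s. x * exp ((a-l) * s))"
    by (auto simp: fun_eq_iff left_diff_distrib exp_diff exp_minus field_simps)
  then show ?thesis unfolding cf_def using int_exp_M01[of "a-l"] assms by simp
qed

lemma Lp_one_inf: "Lp_norm \<infinity> (\<lambda>t. 1) = 1"
  unfolding Lp_norm_def using emeasure_M01_space by (simp add: esssup_const)

lemma case_inf: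
  shows "((\<lambda>l. real_of_ereal (S_opnorm \<infinity> l) / (C_const \<infinity> * exp l / l)) \<longlongrightarrow> 1) at_top"
    "((\<lambda>l. real_of_ereal (Lp_norm \<infinity> (S_op l (f_ext \<infinity> g l))) /
         (real_of_ereal (S_opnorm \<infinity> l) * real_of_ereal (Lp_norm \<infinity> (f_ext \<infinity> g l)))) \<longlongrightarrow> 1) at_top"
proof -
  have fe: "f_ext \<infinity> g l = (\<lambda>t. 1)" for l by (simp add: f_ext_def fun_eq_iff)
  have c1: "cf l (\<lambda>t. 1) = (exp (-l) - 1) / (-l)" if "0 < l" for l
    using cf_exp[of 0 l 1] that by simp
  have ev: "eventually (\<lambda>l. 0 < l \<and> Lp_norm \<infinity> (f_ext \<infinity> g l) = ereal ((\<lambda>_. 1) l) \<and> 0 < (\<lambda>_. (1::real)) l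
        \<and> 0 < Bq \<infinity> l
        \<and> \<bar>cf l (f_ext \<infinity> g l)\<bar> = Bq \<infinity> l
        \<and> (\<exists>h. h \<in> borel_measurable M01 \<and> Lp_norm \<infinity> h \<le> 1 \<and> \<bar>cf l h\<bar> = Bq \<infinity> l / (\<lambda>_. 1) l)) at_top"
    using eventually_gt_at_top[of 0]
  proof (rule eventually_mono)
    fix l :: real assume l: "0 < l"
    have B: "Bq \<infinity> l = (exp (-l) - 1) / (-l)" by (simp add: Bq_def)
    have Bp: "0 < Bq \<infinity> l" using Bq_pos[OF l] by simp
    show "0 < l \<and> Lp_norm \<infinity> (f_ext \<infinity> g l) = ereal ((\<lambda>_. 1) l) \<and> 0 < (\<lambda>_. (1::real)) l
        \<and> 0 < Bq \<infinity> l
        \<and> \<bar>cf l (f_ext \<infinity> g l)\<bar> = Bq \<infinity> l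
        \<and> (\<exists>h. h \<in> borel_measurable M01 \<and> Lp_norm \<infinity> h \<le> 1 \<and> \<bar>cf l h\<bar> = Bq \<infinity> l / (\<lambda>_. 1) l)"
    proof -
      have cB: "cf l (\<lambda>t. 1) = Bq \<infinity> l" using c1[OF l] B by simp
      show ?thesis
        using l Bp cB Lp_one_inf unfolding fe
        by (auto intro!: exI[of _ "\<lambda>t. 1"] meas_M01)
    qed
  qed
  have R: "((\<lambda>l. Bq \<infinity> l / (Bq \<infinity> l * (\<lambda>_. 1) l)) \<longlongrightarrow> 1) at_top"
  proof (rule Lim_transform_eventually[OF tendsto_const])
    show "eventually (\<lambda>l. 1 = Bq \<infinity> l / (Bq \<infinity> l * (\<lambda>_. 1) l)) at_top"
      using eventually_gt_at_top[of "0::real"]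
    proof (rule eventually_mono)
      fix l :: real assume "0 < l"
      then have "0 < Bq \<infinity> l" using Bq_pos[of l \<infinity>] by simp
      then show "1 = Bq \<infinity> l / (Bq \<infinity> l * (\<lambda>_. 1) l)" by simp
    qed
  qed
  have K: "((\<lambda>l. Afun \<infinity> l * Bq \<infinity> l / (C_const \<infinity> * exp l / l)) \<longlongrightarrow> 1) at_top"
  proof -
    have e: "C_const \<infinity> = 1" "Afun \<infinity> l = exp l" "Bq \<infinity> l = (exp (-l) - 1) / (-l)" for l
      by (simp_all add: C_const_def Afun_def Bq_def)
    show ?thesis unfolding e by real_asymp
  qed
  note br = bridge[OF _ ev R K]
  show "((\<lambda>l. real_of_ereal (S_opnorm \<infinity> l) / (C_const \<infinity> * exp l / l)) \<longlongrightarrow> 1) at_top"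
    using br(1) by simp
  show "((\<lambda>l. real_of_ereal (Lp_norm \<infinity> (S_op l (f_ext \<infinity> g l))) /
         (real_of_ereal (S_opnorm \<infinity> l) * real_of_ereal (Lp_norm \<infinity> (f_ext \<infinity> g l)))) \<longlongrightarrow> 1) at_top"
    using br(2) by simp
qed



lemma neg_quot: "(u - 1) / (- y) = (1 - u) / (y::real)"
  by (cases "y = 0") (auto simp: field_simps)

lemma case_one:
  assumes g: "filterlim g at_top at_top"
  shows "((\<lambda>l. real_of_ereal (S_opnorm 1 l) / (C_const 1 * exp l / l)) \<longlongrightarrow> 1) at_top"
    "((\<lambda>l. real_of_ereal (Lp_norm 1 (S_op l (f_ext 1 g l))) /
         (real_of_ereal (S_opnorm 1 l) * real_of_ereal (Lp_norm 1 (f_ext 1 g l)))) \<longlongrightarrow> 1) at_top"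
proof -
  define a where "a l = - (g l * l)" for l
  define N where "N l = (exp (a l) - 1) / a l" for l
  define c where "c l = (exp (a l - l) - 1) / (a l - l)" for l
  have fe: "f_ext 1 g l = (\<lambda>t. exp (a l * t) * 1)" for l by (simp add: f_ext_def fun_eq_iff a_def)
  have Lp1: "Lp_norm 1 (\<lambda>t. exp (b * t) * x) = ereal (\<bar>x\<bar> * ((exp b - 1) / b))" if "b \<noteq> 0" for b x
  proof -
    have "Lp_norm 1 (\<lambda>t. exp (b * t) * x) = ereal (\<bar>x\<bar> * ((exp (real_of_ereal 1 * b) - 1) / (real_of_ereal 1 * b)) powr (1 / real_of_ereal 1))"
      by (rule Lp_exp_finite) (auto simp: that)
    also have "((exp (real_of_ereal 1 * b) - 1) / (real_of_ereal 1 * b)) powr (1 / real_of_ereal 1) = (exp b - 1) / b"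
    proof -
      have r1: "real_of_ereal (1::ereal) = 1" by simp
      show ?thesis unfolding r1 mult_1 div_by_1 using exp_quot_nonneg[OF that] by (intro powr_one less_imp_le)
    qed
    finally show ?thesis by simp
  qed
  have evg: "eventually (\<lambda>l. 1 \<le> g l) at_top" using g by (simp add: filterlim_at_top)
  have ev: "eventually (\<lambda>l. 0 < l \<and> Lp_norm 1 (f_ext 1 g l) = ereal (N l) \<and> 0 < N l \<and> 0 < c l
        \<and> \<bar>cf l (f_ext 1 g l)\<bar> = c l
        \<and> (\<exists>h. h \<in> borel_measurable M01 \<and> Lp_norm 1 h \<le> 1 \<and> \<bar>cf l h\<bar> = c l / N l)) at_top"
    using eventually_conj[OF eventually_gt_at_top[of "0::real"] evg]
  proof (rule eventually_mono)
    fix l :: real assume lg: "0 < l \<and> 1 \<le> g l"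
    then have l: "0 < l" and gl: "1 \<le> g l" by auto
    have a0: "a l < 0" using l gl unfolding a_def by (simp add: mult_pos_pos)
    have al: "a l - l \<noteq> 0" "a l \<noteq> l" using a0 l by auto
    have N0: "0 < N l" unfolding N_def using exp_quot_nonneg[of "a l"] a0 by simp
    have c0: "0 < c l" unfolding c_def using exp_quot_nonneg[OF al(1)] by simp
    have cfe: "cf l (f_ext 1 g l) = c l" unfolding fe cf_exp[OF al(2)] c_def by simp
    have Lfe: "Lp_norm 1 (f_ext 1 g l) = ereal (N l)" unfolding fe N_def using Lp1[of "a l" 1] a0 by simp
    have hm: "(\<lambda>t. exp (a l * t) * (1 / N l)) \<in> borel_measurable M01" by (intro meas_M01) measurable
    have hL: "Lp_norm 1 (\<lambda>t. exp (a l * t) * (1 / N l)) \<le> 1"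
    proof -
      have ne: "a l \<noteq> 0" using a0 by simp
      have "Lp_norm 1 (\<lambda>t. exp (a l * t) * (1 / N l)) = ereal (\<bar>1 / N l\<bar> * N l)"
        using Lp1[OF ne, of "1 / N l"] unfolding N_def[symmetric] .
      then show ?thesis using N0 by simp
    qed
    have hc: "\<bar>cf l (\<lambda>t. exp (a l * t) * (1 / N l))\<bar> = c l / N l"
    proof -
      have "cf l (\<lambda>t. exp (a l * t) * (1 / N l)) = 1 / N l * c l"
        unfolding cf_exp[OF al(2)] c_def ..
      then show ?thesis using N0 c0 by (simp add: abs_mult)
    qed
    show "0 < l \<and> Lp_norm 1 (f_ext 1 g l) = ereal (N l) \<and> 0 < N l \<and> 0 < c l
        \<and> \<bar>cf l (f_ext 1 g l)\<bar> = c l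
        \<and> (\<exists>h. h \<in> borel_measurable M01 \<and> Lp_norm 1 h \<le> 1 \<and> \<bar>cf l h\<bar> = c l / N l)"
      using l N0 c0 cfe Lfe hm hL hc by (intro conjI exI[of _ "\<lambda>t. exp (a l * t) * (1 / N l)"]) auto
  qed
  have B1: "Bq 1 l = 1" for l by (simp add: Bq_def)
  have R: "((\<lambda>l. c l / (Bq 1 l * N l)) \<longlongrightarrow> 1) at_top"
  proof -
    have k: "filterlim (\<lambda>l. g l * l) at_top at_top"
      by (rule filterlim_at_top_mult_at_top[OF g filterlim_ident])
    have kl: "filterlim (\<lambda>l. g l * l + l) at_top at_top"
      by (rule filterlim_at_top_add_at_top[OF k filterlim_ident])
    have ex: "((\<lambda>x::real. exp (-x)) \<longlongrightarrow> 0) at_top" by real_asymp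
    have e1: "((\<lambda>l. exp (- (g l * l))) \<longlongrightarrow> 0) at_top"
      using filterlim_compose[OF ex k] by simp
    have e2: "((\<lambda>l. exp (- (g l * l + l))) \<longlongrightarrow> 0) at_top"
      using filterlim_compose[OF ex kl] by simp
    have fr: "((\<lambda>x::real. x / (x + 1)) \<longlongrightarrow> 1) at_top" by real_asymp
    have e3: "((\<lambda>l. g l / (g l + 1)) \<longlongrightarrow> 1) at_top"
      using filterlim_compose[OF fr g] by simp
    have lim: "((\<lambda>l. g l / (g l + 1) * ((1 - exp (- (g l * l + l))) / (1 - exp (- (g l * l))))) \<longlongrightarrow> 1 * ((1 - 0) / (1 - 0))) at_top"
      by (intro tendsto_intros e1 e2 e3) auto
    have "eventually (\<lambda>l. g l / (g l + 1) * ((1 - exp (- (g l * l + l))) / (1 - exp (- (g l * l)))) = c l / (Bq 1 l * N l)) at_top"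
      using eventually_conj[OF eventually_gt_at_top[of "0::real"] evg]
    proof (rule eventually_mono, clarify)
      fix l :: real assume l: "0 < l" and gl: "1 \<le> g l"
      have k0: "0 < g l * l" using l gl by simp
      have e0: "exp (- (g l * l)) < 1" using k0 by simp
      have "c l / (Bq 1 l * N l) = ((1 - exp (- (g l * l + l))) / (g l * l + l)) / ((1 - exp (- (g l * l))) / (g l * l))"
      proof -
        have eq: "a l - l = - (g l * l + l)" by (simp add: a_def)
        have d1: "(exp (- (g l * l + l)) - 1) / (- (g l * l + l)) = (1 - exp (- (g l * l + l))) / (g l * l + l)"
          by (rule neg_quot)
        have d2: "(exp (- (g l * l)) - 1) / (- (g l * l)) = (1 - exp (- (g l * l))) / (g l * l)"
          by (rule neg_quot)
        show ?thesis unfolding c_def N_def eq B1 mult_1 unfolding a_def d1 d2 ..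
      qed
      also have "\<dots> = (g l * l / (g l * l + l)) * ((1 - exp (- (g l * l + l))) / (1 - exp (- (g l * l))))"
        using e0 k0 l by (simp add: field_simps)
      also have "g l * l / (g l * l + l) = g l / (g l + 1)"
      proof -
        have "g l * l + l = (g l + 1) * l" by (simp add: algebra_simps)
        then show ?thesis using l gl by simp
      qed
      finally show "g l / (g l + 1) * ((1 - exp (- (g l * l + l))) / (1 - exp (- (g l * l)))) = c l / (Bq 1 l * N l)"
        by simp
    qed
    then show ?thesis using lim by (simp add: Lim_transform_eventually)
  qed
  have K: "((\<lambda>l. Afun 1 l * Bq 1 l / (C_const 1 * exp l / l)) \<longlongrightarrow> 1) at_top"
  proof -
    have e: "C_const 1 = 1" "Bq 1 l = 1" for l by (simp_all add: C_const_def Bq_def)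
    have A1: "Afun 1 l = (exp l - 1) / l" if "0 < l" for l
      using exp_quot_nonneg[of l] that by (simp add: Afun_def PP_def)
    have "eventually (\<lambda>l. ((exp l - 1) / l) / (exp l / l) = Afun 1 l * Bq 1 l / (C_const 1 * exp l / l)) at_top"
      using eventually_gt_at_top[of "0::real"]
    proof (rule eventually_mono)
      fix l :: real assume "0 < l"
      then show "((exp l - 1) / l) / (exp l / l) = Afun 1 l * Bq 1 l / (C_const 1 * exp l / l)"
        unfolding A1[OF \<open>0 < l\<close>] e by simp
    qed
    moreover have "((\<lambda>l::real. ((exp l - 1) / l) / (exp l / l)) \<longlongrightarrow> 1) at_top" by real_asymp
    ultimately show ?thesis by (simp add: Lim_transform_eventually)
  qed
  note br = bridge[OF _ ev R K]
  show "((\<lambda>l. real_of_ereal (S_opnorm 1 l) / (C_const 1 * exp l / l)) \<longlongrightarrow> 1) at_top"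
    using br(1) by simp
  show "((\<lambda>l. real_of_ereal (Lp_norm 1 (S_op l (f_ext 1 g l))) /
         (real_of_ereal (S_opnorm 1 l) * real_of_ereal (Lp_norm 1 (f_ext 1 g l)))) \<longlongrightarrow> 1) at_top"
    using br(2) by simp
qed



lemma powr_quot_split:
  fixes P l Y :: real
  assumes "0 < P" "0 < l" "0 < Y"
  shows "(Y / (P * l)) powr (1 / P) = Y powr (1/P) / (P powr (1/P) * l powr (1/P))"
  using assms by (simp add: powr_divide powr_mult)

lemma K_mid:
  assumes P1: "1 < PP p" and p1: "p \<noteq> 1" and pinf: "p \<noteq> \<infinity>"
  shows "((\<lambda>l. Afun p l * Bq p l / (C_const p * exp l / l)) \<longlongrightarrow> 1) at_top"
proof -
  define P where "P = PP p"
  define Q where "Q = QQ p"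
  have P1': "1 < P" and Q1: "1 < Q" and PQ: "1/P + 1/Q = 1"
    using QQ_facts[OF P1] P1 unfolding P_def Q_def by auto
  have C: "C_const p = 1 / (P powr (1/P) * Q powr (1/Q))"
    using p1 pinf unfolding C_const_def P_def Q_def QQ_def PP_def by (simp add: Let_def)
  have eq: "Afun p l * Bq p l / (C_const p * exp l / l) =
      (1 - exp (-(P*l))) powr (1/P) * (1 - exp (-(Q*l))) powr (1/Q)" if l: "0 < l" for l
  proof -
    define y where "y = (1 - exp (-(P*l))) powr (1/P)"
    define z where "z = (1 - exp (-(Q*l))) powr (1/Q)"
    define a1 where "a1 = P powr (1/P)"
    define a2 where "a2 = Q powr (1/Q)"
    define lp where "lp = l powr (1/P)"
    define lq where "lq = l powr (1/Q)"
    have pos: "0 < a1" "0 < a2" "0 < lp" "0 < lq" using P1' Q1 l unfolding a1_def a2_def lp_def lq_def by auto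
    have lpq: "lp * lq = l" unfolding lp_def lq_def using l PQ by (simp add: powr_add[symmetric])
    have Y: "0 < 1 - exp (-(P*l))" "0 < 1 - exp (-(Q*l))" using P1' Q1 l by auto
    have "exp (P*l) - 1 = exp (P*l) * (1 - exp (-(P*l)))" by (simp add: algebra_simps exp_minus)
    then have "Afun p l = (exp (P*l) * (1 - exp (-(P*l))) / (P * l)) powr (1/P)"
      using pinf unfolding Afun_def P_def by simp
    also have "\<dots> = (exp (P*l) * (1 - exp (-(P*l)))) powr (1/P) / (a1 * lp)"
      unfolding a1_def lp_def using P1' l Y by (intro powr_quot_split) auto
    also have "(exp (P*l) * (1 - exp (-(P*l)))) powr (1/P) = exp l * y"
      unfolding y_def using Y P1' by (simp add: powr_mult exp_powr')
    finally have A: "Afun p l = exp l * y / (a1 * lp)" .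
    have "Bq p l = ((exp (-(Q*l)) - 1) / (-(Q * l))) powr (1/Q)"
      using p1 pinf unfolding Bq_def Q_def by simp
    also have "\<dots> = ((1 - exp (-(Q*l))) / (Q * l)) powr (1/Q)"
      by (simp only: neg_quot)
    also have "\<dots> = z / (a2 * lq)"
      unfolding z_def a2_def lq_def using Q1 l Y by (intro powr_quot_split) auto
    finally have B: "Bq p l = z / (a2 * lq)" .
    have "Afun p l * Bq p l / (C_const p * exp l / l) = exp l * y / (a1 * lp) * (z / (a2 * lq)) / (1 / (a1 * a2) * exp l / (lp * lq))"
      unfolding A B C lpq a1_def[symmetric] a2_def[symmetric] ..
    also have "\<dots> = y * z" using pos by (simp add: field_simps)
    finally show ?thesis unfolding y_def z_def .
  qed
  have lim1: "((\<lambda>l. 1 - exp (-(R*l))) \<longlongrightarrow> 1) at_top" if "0 < R" for R :: real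
  proof -
    have f: "filterlim (\<lambda>l. R * l) at_top at_top"
      by (rule filterlim_tendsto_pos_mult_at_top[OF tendsto_const that filterlim_ident])
    have ex: "((\<lambda>x::real. exp (-x)) \<longlongrightarrow> 0) at_top" by real_asymp
    have "((\<lambda>l. exp (-(R*l))) \<longlongrightarrow> 0) at_top" using filterlim_compose[OF ex f] by simp
    then show ?thesis using tendsto_diff[OF tendsto_const[of 1]] by fastforce
  qed
  have "((\<lambda>l. (1 - exp (-(P*l))) powr (1/P) * (1 - exp (-(Q*l))) powr (1/Q)) \<longlongrightarrow> 1 powr (1/P) * 1 powr (1/Q)) at_top"
    using P1' Q1 by (intro tendsto_intros lim1) auto
  then have "((\<lambda>l. (1 - exp (-(P*l))) powr (1/P) * (1 - exp (-(Q*l))) powr (1/Q)) \<longlongrightarrow> 1) at_top" by simp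
  moreover have "eventually (\<lambda>l. (1 - exp (-(P*l))) powr (1/P) * (1 - exp (-(Q*l))) powr (1/Q) =
      Afun p l * Bq p l / (C_const p * exp l / l)) at_top"
    using eventually_gt_at_top[of "0::real"]
  proof (rule eventually_mono)
    fix l :: real assume "0 < l"
    show "(1 - exp (-(P*l))) powr (1/P) * (1 - exp (-(Q*l))) powr (1/Q) =
      Afun p l * Bq p l / (C_const p * exp l / l)" using eq[OF \<open>0 < l\<close>] by (rule sym)
  qed
  ultimately show ?thesis by (rule Lim_transform_eventually)
qed



lemma case_mid:
  assumes P1: "1 < PP p" and p1: "p \<noteq> 1" and pinf: "p \<noteq> \<infinity>"
  shows "((\<lambda>l. real_of_ereal (S_opnorm p l) / (C_const p * exp l / l)) \<longlongrightarrow> 1) at_top"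
    "((\<lambda>l. real_of_ereal (Lp_norm p (S_op l (f_ext p g l))) /
         (real_of_ereal (S_opnorm p l) * real_of_ereal (Lp_norm p (f_ext p g l)))) \<longlongrightarrow> 1) at_top"
proof -
  define P where "P = PP p"
  define Q where "Q = QQ p"
  have P1': "1 < P" and Q1: "1 < Q" and PQ: "1/P + 1/Q = 1"
    using QQ_facts[OF P1] P1 unfolding P_def Q_def by auto
  have pge: "1 \<le> p"
  proof (rule ccontr)
    assume "\<not> 1 \<le> p" then have "p < 1" by simp
    then have "PP p \<le> 1" unfolding PP_def by (cases p) auto
    then show False using P1 by simp
  qed
  define a where "a l = - (l / (P - 1))" for l
  define J where "J l = (exp (-(Q*l)) - 1) / (-(Q*l))" for l
  define N where "N l = J l powr (1/P)" for l
  have Pa: "P * a l = -(Q*l)" for l unfolding a_def Q_def QQ_def P_def[symmetric] using P1'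
    by (simp add: field_simps)
  have al: "a l - l = -(Q*l)" for l unfolding a_def Q_def QQ_def P_def[symmetric] using P1'
    by (simp add: field_simps)
  have fe: "f_ext p g l = (\<lambda>t. exp (a l * t) * 1)" for l
    using p1 pinf unfolding f_ext_def a_def P_def PP_def by (simp add: fun_eq_iff field_simps)
  have B: "Bq p l = J l powr (1/Q)" for l using p1 pinf unfolding Bq_def J_def Q_def by simp
  have Lpa: "Lp_norm p (\<lambda>t. exp (a l * t) * x) = ereal (\<bar>x\<bar> * N l)" if "0 < l" for l x
  proof -
    have "a l \<noteq> 0" using that P1' unfolding a_def by simp
    from Lp_exp_finite[OF pge pinf this, of x] show ?thesis
      unfolding PP_def[symmetric] P_def[symmetric] Pa N_def J_def .
  qed
  have ev: "eventually (\<lambda>l. 0 < l \<and> Lp_norm p (f_ext p g l) = ereal (N l) \<and> 0 < N l \<and> 0 < J l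
        \<and> \<bar>cf l (f_ext p g l)\<bar> = J l
        \<and> (\<exists>h. h \<in> borel_measurable M01 \<and> Lp_norm p h \<le> 1 \<and> \<bar>cf l h\<bar> = J l / N l)) at_top"
    using eventually_gt_at_top[of "0::real"]
  proof (rule eventually_mono)
    fix l :: real assume l: "0 < l"
    have Ql: "-(Q*l) \<noteq> 0" using Q1 l by simp
    have J0: "0 < J l" unfolding J_def by (rule exp_quot_nonneg[OF Ql])
    have N0: "0 < N l" unfolding N_def using J0 by simp
    have aln: "a l \<noteq> l" using al[of l] Q1 l by auto
    have cfe: "cf l (\<lambda>t. exp (a l * t) * x) = x * J l" for x
      unfolding cf_exp[OF aln] al J_def ..
    have Lfe: "Lp_norm p (f_ext p g l) = ereal (N l)" unfolding fe Lpa[OF l] by simp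
    have hm: "(\<lambda>t. exp (a l * t) * (1 / N l)) \<in> borel_measurable M01" by (intro meas_M01) measurable
    have hL: "Lp_norm p (\<lambda>t. exp (a l * t) * (1 / N l)) \<le> 1"
      unfolding Lpa[OF l] using N0 by simp
    have hc: "\<bar>cf l (\<lambda>t. exp (a l * t) * (1 / N l))\<bar> = J l / N l"
      unfolding cfe using N0 J0 by (simp add: abs_mult)
    show "0 < l \<and> Lp_norm p (f_ext p g l) = ereal (N l) \<and> 0 < N l \<and> 0 < J l
        \<and> \<bar>cf l (f_ext p g l)\<bar> = J l
        \<and> (\<exists>h. h \<in> borel_measurable M01 \<and> Lp_norm p h \<le> 1 \<and> \<bar>cf l h\<bar> = J l / N l)"
      using l N0 J0 Lfe hm hL hc cfe[of 1] unfolding fe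
      by (intro conjI exI[of _ "\<lambda>t. exp (a l * t) * (1 / N l)"]) auto
  qed
  have R: "((\<lambda>l. J l / (Bq p l * N l)) \<longlongrightarrow> 1) at_top"
  proof (rule Lim_transform_eventually[OF tendsto_const])
    show "eventually (\<lambda>l. 1 = J l / (Bq p l * N l)) at_top"
      using eventually_gt_at_top[of "0::real"]
    proof (rule eventually_mono)
      fix l :: real assume l: "0 < l"
      have Ql: "-(Q*l) \<noteq> 0" using Q1 l by simp
      have J0: "0 < J l" unfolding J_def by (rule exp_quot_nonneg[OF Ql])
      have "Bq p l * N l = J l powr (1/Q + 1/P)" unfolding B N_def by (simp add: powr_add)
      also have "\<dots> = J l" using PQ J0 by (simp add: add.commute)
      finally show "1 = J l / (Bq p l * N l)" using J0 by simp
    qed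
  qed
  note br = bridge[OF pge ev R K_mid[OF P1 p1 pinf]]
  show "((\<lambda>l. real_of_ereal (S_opnorm p l) / (C_const p * exp l / l)) \<longlongrightarrow> 1) at_top"
    using br(1) .
  show "((\<lambda>l. real_of_ereal (Lp_norm p (S_op l (f_ext p g l))) /
         (real_of_ereal (S_opnorm p l) * real_of_ereal (Lp_norm p (f_ext p g l)))) \<longlongrightarrow> 1) at_top"
    using br(2) .
qed

theorem lemma3p1:
  fixes p :: ereal
  assumes "1 \<le> p"
  shows "(\<lambda>l. real_of_ereal (S_opnorm p l)) \<sim>[at_top] (\<lambda>l. C_const p * exp l / l)
    \<and> (\<forall>g :: real \<Rightarrow> real. filterlim g at_top at_top \<longrightarrow>
         (\<lambda>l. real_of_ereal (Lp_norm p (S_op l (f_ext p g l))))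
           \<sim>[at_top] (\<lambda>l. real_of_ereal (S_opnorm p l) * real_of_ereal (Lp_norm p (f_ext p g l))))"
proof -
  have main: "((\<lambda>l. real_of_ereal (S_opnorm p l) / (C_const p * exp l / l)) \<longlongrightarrow> 1) at_top \<and>
    ((\<lambda>l. real_of_ereal (Lp_norm p (S_op l (f_ext p g l))) /
         (real_of_ereal (S_opnorm p l) * real_of_ereal (Lp_norm p (f_ext p g l)))) \<longlongrightarrow> 1) at_top"
    if g: "filterlim g at_top at_top" for g
    using assms
  proof (cases rule: p_cases)
    case 1 then show ?thesis using case_one[OF g] by simp
  next
    case 2 then show ?thesis using case_inf(1) case_inf(2)[where g=g] by simp
  next
    case 3 then show ?thesis using case_mid[OF 3(3) 3(1) 3(2)] by simp
  qed
  have gid: "filterlim (\<lambda>x::real. x) at_top at_top" by (rule filterlim_ident)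
  show ?thesis
  proof (intro conjI allI impI)
    show "(\<lambda>l. real_of_ereal (S_opnorm p l)) \<sim>[at_top] (\<lambda>l. C_const p * exp l / l)"
      using main[OF gid] by (intro asymp_equivI') simp
  next
    fix g :: "real \<Rightarrow> real" assume g: "filterlim g at_top at_top"
    show "(\<lambda>l. real_of_ereal (Lp_norm p (S_op l (f_ext p g l))))
           \<sim>[at_top] (\<lambda>l. real_of_ereal (S_opnorm p l) * real_of_ereal (Lp_norm p (f_ext p g l)))"
      using main[OF g] by (intro asymp_equivI') simp
  qed
qed

end
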